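(* Fix a time $t\ge 0$ and an evaluation policy $\pi_e$. Assume (common support) that for all $x,a$, $\pi_e(a\mid x)>0$ implies $\pi_0(a\mid x)>0$, and (conditional independent censoring) that $L$ and $C$ are conditionally independent given $(x,a)$. Let $\hat\pi_0$, $\hat G$, $\hat S$ be fixed (non-random, not depending on $\mathcal{D}$) models of the propensity score, censoring survival function and survival function, with $\hat G(t\mid x,a)>0$ and $\hat\pi_0(a\mid x)>0$ whenever $\pi_e(a\mid x)>0$, and write $\hat w(x,a)=\pi_e(a\mid x)/\hat\pi_0(a\mid x)$. Define $$\hat V_{\mathrm{IPCW\text{-}IPS}}(\pi_e,t;\mathcal{D})=\frac1n\sum_{i=1}^n \hat w(x_i,a_i)\frac{\mathbb{I}\{T_i>t\}}{\hat G(t\mid x_i,a_i)},$$ $$\hat V_{\mathrm{IPCW\text{-}DR}}(\pi_e,t;\mathcal{D})=\frac1n\sum_{i=1}^n\Big(\hat w(x_i,a_i)\Big(\frac{\mathbb{I}\{T_i>t\}}{\hat G(t\mid x_i,a_i)}-\hat S(x_i,a_i,t)\Big)+\sum_{a\in\mathcal{A}}\pi_e(a\mid x_i)\hat S(x_i,a,t)\Big).$$ Suppose the censoring model is correctly specified, $\hat G(t\mid x,a)=G(t\mid x,a)$ for all $x,a$. Then: (1) if the propensity score is correctly specified ($\hat\pi_0=\pi_0$), $\hat V_{\mathrm{IPCW\text{-}IPS}}$ is unbiased for $V(\pi_e,t)$, i.e. $\mathbb{E}_{\mathcal{D}}[\hat V_{\mathrm{IPCW\text{-}IPS}}(\pi_e,t;\mathcal{D})]=V(\pi_e,t)$;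 (2) if either the propensity score is correctly specified ($\hat\pi_0=\pi_0$) or the outcome model is correctly specified ($\hat S(x,a,t)=S(x,a,t)$ for all $x,a$), then $\hat V_{\mathrm{IPCW\text{-}DR}}$ is unbiased for $V(\pi_e,t)$.
   Context: Let $\mathcal{X}$ be a context space and $\mathcal{A}$ a finite action set. A policy $\pi(a\mid x)$ is a conditional distribution over $\mathcal{A}$ given $x$. The logged data $\mathcal{D}=\{(x_i,a_i,T_i,r_i)\}_{i=1}^n$ consists of $n$ i.i.d. draws generated by $(x,a,L,C)\sim p(x)\pi_0(a\mid x)p(L,C\mid x,a)$ for a logging policy $\pi_0$, where $L\ge0$ is the latent survival time, $C\ge0$ the censoring time, and only $T=\min\{L,C\}$ and $r=\mathbb{I}\{L\le C\}$ are observed. Define $S(x,a,t)=P(L>t\mid x,a)$, $G(t\mid x,a)=P(C>t\mid x,a)$, and the policy value $V(\pi_e,t)=\mathbb{E}_{p(x)\pi_e(a\mid x)}[S(x,a,t)]$. *)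

theory Defs
  imports "HOL-Probability.Probability"
begin

text \<open>Contexts live in a measurable space carried by the context distribution p.
  Actions form a finite type 'a.  A policy is a map pi x a = pi(a|x).\<close>

definition is_policy :: "'x measure \<Rightarrow> ('x \<Rightarrow> 'a::finite \<Rightarrow> real) \<Rightarrow> bool" where
  "is_policy p pol \<longleftrightarrow>
     (\<forall>a. (\<lambda>x. pol x a) \<in> borel_measurable p) \<and>
     (\<forall>x\<in>space p. (\<forall>a. 0 \<le> pol x a) \<and> (\<Sum>a\<in>UNIV. pol x a) = 1)"

text \<open>Space of a full sample (x, a, L, C).\<close>
definition sample_space :: "'x measure \<Rightarrow> ('x \<times> 'a \<times> real \<times> real) measure" where
  "sample_space p = p \<Otimes>\<^sub>M count_space UNIV \<Otimes>\<^sub>M (borel :: (real \<times> real) measure)"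

text \<open>Data generating distribution p(x) pi0(a|x) p(L,C|x,a); K x a is the law of (L,C) given (x,a).\<close>
definition gen_dist ::
  "'x measure \<Rightarrow> ('x \<Rightarrow> 'a \<Rightarrow> real) \<Rightarrow> ('x \<Rightarrow> 'a \<Rightarrow> (real \<times> real) measure)
     \<Rightarrow> ('x \<times> 'a \<times> real \<times> real) measure" where
  "gen_dist p pi0 K =
     density (p \<Otimes>\<^sub>M count_space UNIV) (\<lambda>(x,a). ennreal (pi0 x a)) \<bind>
       (\<lambda>(x,a). distr (K x a) (sample_space p) (\<lambda>lc. (x, a, lc)))"

definition data_dist ::
  "nat \<Rightarrow> ('x \<times> 'a \<times> real \<times> real) measure \<Rightarrow> (nat \<Rightarrow> 'x \<times> 'a \<times> real \<times> real) measure" where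
  "data_dist n P = PiM {..<n} (\<lambda>_. P)"

definition surv :: "('x \<Rightarrow> 'a \<Rightarrow> (real \<times> real) measure) \<Rightarrow> 'x \<Rightarrow> 'a \<Rightarrow> real \<Rightarrow> real" where
  "surv K x a t = measure (K x a) {lc. fst lc > t}"

definition cens_surv :: "('x \<Rightarrow> 'a \<Rightarrow> (real \<times> real) measure) \<Rightarrow> real \<Rightarrow> 'x \<Rightarrow> 'a \<Rightarrow> real" where
  "cens_surv K t x a = measure (K x a) {lc. snd lc > t}"

definition policy_value ::
  "'x measure \<Rightarrow> ('x \<Rightarrow> 'a::finite \<Rightarrow> real) \<Rightarrow> ('x \<Rightarrow> 'a \<Rightarrow> (real \<times> real) measure) \<Rightarrow> real \<Rightarrow> real" where
  "policy_value p pie K t = (\<integral>x. (\<Sum>a\<in>UNIV. pie x a * surv K x a t) \<partial>p)"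

definition observe :: "'x \<times> 'a \<times> real \<times> real \<Rightarrow> 'x \<times> 'a \<times> real \<times> real" where
  "observe z = (case z of (x, a, l, c) \<Rightarrow> (x, a, min l c, if l \<le> c then 1 else 0))"

definition wgt :: "('x \<Rightarrow> 'a \<Rightarrow> real) \<Rightarrow> ('x \<Rightarrow> 'a \<Rightarrow> real) \<Rightarrow> 'x \<Rightarrow> 'a \<Rightarrow> real" where
  "wgt pie pi0h x a = pie x a / pi0h x a"

text \<open>Estimators, as functions of the observed data set d i = (x_i, a_i, T_i, r_i), i < n.\<close>
definition V_ipcw_ips ::
  "nat \<Rightarrow> ('x \<Rightarrow> 'a \<Rightarrow> real) \<Rightarrow> ('x \<Rightarrow> 'a \<Rightarrow> real) \<Rightarrow> (real \<Rightarrow> 'x \<Rightarrow> 'a \<Rightarrow> real)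
     \<Rightarrow> real \<Rightarrow> (nat \<Rightarrow> 'x \<times> 'a \<times> real \<times> real) \<Rightarrow> real" where
  "V_ipcw_ips n pie pi0h Gh t d =
     (1 / real n) * (\<Sum>i<n. case d i of (x, a, T, r) \<Rightarrow>
        wgt pie pi0h x a * ((if T > t then 1 else 0) / Gh t x a))"

definition V_ipcw_dr ::
  "nat \<Rightarrow> ('x \<Rightarrow> 'a::finite \<Rightarrow> real) \<Rightarrow> ('x \<Rightarrow> 'a \<Rightarrow> real) \<Rightarrow> (real \<Rightarrow> 'x \<Rightarrow> 'a \<Rightarrow> real)
     \<Rightarrow> ('x \<Rightarrow> 'a \<Rightarrow> real \<Rightarrow> real) \<Rightarrow> real \<Rightarrow> (nat \<Rightarrow> 'x \<times> 'a \<times> real \<times> real) \<Rightarrow> real" where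
  "V_ipcw_dr n pie pi0h Gh Sh t d =
     (1 / real n) * (\<Sum>i<n. case d i of (x, a, T, r) \<Rightarrow>
        wgt pie pi0h x a * ((if T > t then 1 else 0) / Gh t x a - Sh x a t)
        + (\<Sum>b\<in>UNIV. pie x b * Sh x b t))"

end

theory Submission
  imports Defs
begin


locale gsetup =
  fixes p :: "'x measure" and pi0 :: "'x \<Rightarrow> 'a::finite \<Rightarrow> real"
    and K :: "'x \<Rightarrow> 'a \<Rightarrow> (real \<times> real) measure"
  assumes p_prob: "prob_space p"
    and pi0_policy: "is_policy p pi0"
    and K_kernel: "(\<lambda>(x, a). K x a) \<in> measurable (p \<Otimes>\<^sub>M count_space UNIV) (prob_algebra borel)"
begin

abbreviation "P \<equiv> gen_dist p pi0 K"
abbreviation "Q0 \<equiv> density (p \<Otimes>\<^sub>M count_space UNIV) (\<lambda>(x,a). ennreal (pi0 x a))"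
definition "kern = (\<lambda>(x::'x,a::'a). distr (K x a) (sample_space p) (\<lambda>lc. (x, a, lc)))"

lemma pi0_meas[measurable]: "(\<lambda>x. pi0 x a) \<in> borel_measurable p"
  using pi0_policy unfolding is_policy_def by auto

lemma pi0_meas2: "(\<lambda>y. pi0 (fst y) (snd y)) \<in> borel_measurable (p \<Otimes>\<^sub>M count_space UNIV)"
proof -
  have "(\<lambda>y. (\<lambda>a y. pi0 (fst y) a) (snd y) y) \<in> borel_measurable (p \<Otimes>\<^sub>M count_space UNIV)"
    by (rule measurable_compose_countable'[where I=UNIV]) (auto intro: measurable_compose[OF measurable_fst pi0_meas])
  then show ?thesis by simp
qed

lemma pi0_nonneg: "x \<in> space p \<Longrightarrow> 0 \<le> pi0 x a"
  using pi0_policy unfolding is_policy_def by auto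

lemma pi0_sum: "x \<in> space p \<Longrightarrow> (\<Sum>a\<in>UNIV. pi0 x a) = 1"
  using pi0_policy unfolding is_policy_def by auto

lemma K_space: "x \<in> space p \<Longrightarrow> prob_space (K x a) \<and> sets (K x a) = sets borel"
proof -
  assume x: "x \<in> space p"
  have "(x,a) \<in> space (p \<Otimes>\<^sub>M count_space UNIV)" using x by (simp add: space_pair_measure)
  from measurable_space[OF K_kernel this] show ?thesis by (simp add: space_prob_algebra)
qed

lemma K_prob: "x \<in> space p \<Longrightarrow> prob_space (K x a)" using K_space by blast
lemma K_sets: "x \<in> space p \<Longrightarrow> sets (K x a) = sets borel" using K_space by blast

lemma K_sub: "(\<lambda>y. K (fst y) (snd y)) \<in> measurable (p \<Otimes>\<^sub>M count_space UNIV) (subprob_algebra borel)"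
  using measurable_prob_algebraD[OF K_kernel] by (simp add: case_prod_beta')

lemma K_sub1[measurable]: "(\<lambda>x. K x a) \<in> measurable p (subprob_algebra borel)"
proof -
  have "(\<lambda>x. (x,a)) \<in> measurable p (p \<Otimes>\<^sub>M count_space UNIV)" by measurable
  from measurable_compose[OF this K_sub] show ?thesis by simp
qed

lemma reassoc_meas: "(\<lambda>(y, lc). (fst y, snd y, lc)) \<in> measurable ((p \<Otimes>\<^sub>M count_space UNIV) \<Otimes>\<^sub>M borel) (sample_space p)"
  unfolding sample_space_def by measurable

lemma kern_meas: "kern \<in> measurable (p \<Otimes>\<^sub>M count_space UNIV) (subprob_algebra (sample_space p))"
proof -
  have f: "case_prod (\<lambda>y lc. (fst y, snd y, lc)) \<in> measurable ((p \<Otimes>\<^sub>M count_space UNIV) \<Otimes>\<^sub>M borel) (sample_space p)"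
    unfolding sample_space_def by measurable
  have "(\<lambda>y. distr (K (fst y) (snd y)) (sample_space p) (\<lambda>lc. (fst y, snd y, lc))) \<in> measurable (p \<Otimes>\<^sub>M count_space UNIV) (subprob_algebra (sample_space p))"
    by (rule measurable_distr2[OF f K_sub])
  then show ?thesis unfolding kern_def by (simp add: case_prod_beta')
qed

lemma kern_meas': "kern \<in> measurable Q0 (subprob_algebra (sample_space p))"
proof -
  have "measurable Q0 (subprob_algebra (sample_space p)) = measurable (p \<Otimes>\<^sub>M count_space UNIV) (subprob_algebra (sample_space p))"
    by (rule measurable_cong_sets) simp_all
  then show ?thesis using kern_meas by simp
qed

lemma P_eq: "P = Q0 \<bind> kern"
  unfolding gen_dist_def kern_def by simp

lemma sets_P[measurable_cong]: "sets P = sets (sample_space p)"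
proof -
  have ne: "space Q0 \<noteq> {}" using prob_space.not_empty[OF p_prob]
    by (simp add: space_pair_measure)
  show ?thesis unfolding P_eq
    by (rule sets_bind[OF _ ne]) (simp add: kern_def case_prod_beta')
qed

lemma master:
  assumes h[measurable]: "h \<in> borel_measurable (sample_space p)"
  shows "(\<integral>\<^sup>+z. h z \<partial>P) = (\<integral>\<^sup>+x. (\<Sum>a\<in>UNIV. ennreal (pi0 x a) * (\<integral>\<^sup>+lc. h (x,a,lc) \<partial>K x a)) \<partial>p)"
proof -
  let ?C = "count_space (UNIV::'a set)"
  interpret sf: sigma_finite_measure "?C"
    by (rule sigma_finite_measure_count_space_finite) simp
  have m1: "(\<lambda>y. \<integral>\<^sup>+z. h z \<partial>kern y) \<in> borel_measurable (p \<Otimes>\<^sub>M ?C)"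
    by (rule measurable_compose[OF kern_meas nn_integral_measurable_subprob_algebra[OF h]])
  have "(\<integral>\<^sup>+z. h z \<partial>P) = (\<integral>\<^sup>+y. (\<integral>\<^sup>+z. h z \<partial>kern y) \<partial>Q0)"
    unfolding P_eq by (rule nn_integral_bind[OF h kern_meas'])
  also have "\<dots> = (\<integral>\<^sup>+y. (\<lambda>(x,a). ennreal (pi0 x a)) y * (\<integral>\<^sup>+z. h z \<partial>kern y) \<partial>(p \<Otimes>\<^sub>M ?C))"
    by (rule nn_integral_density) (auto simp: case_prod_beta' m1 pi0_meas2)
  also have "\<dots> = (\<integral>\<^sup>+y. ennreal (pi0 (fst y) (snd y)) * (\<integral>\<^sup>+lc. h (fst y, snd y, lc) \<partial>K (fst y) (snd y)) \<partial>(p \<Otimes>\<^sub>M ?C))"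
  proof (rule nn_integral_cong)
    fix y :: "'x \<times> 'a" assume y: "y \<in> space (p \<Otimes>\<^sub>M ?C)"
    then have x: "fst y \<in> space p" by (auto simp: space_pair_measure)
    have "(\<lambda>lc. (fst y, snd y, lc)) \<in> measurable borel (sample_space p)"
      unfolding sample_space_def using x by simp
    then have mm: "(\<lambda>lc. (fst y, snd y, lc)) \<in> measurable (K (fst y) (snd y)) (sample_space p)"
      using measurable_cong_sets[OF K_sets[OF x, of "snd y"] refl, of "sample_space p"] by metis
    show "(\<lambda>(x,a). ennreal (pi0 x a)) y * (\<integral>\<^sup>+z. h z \<partial>kern y) = ennreal (pi0 (fst y) (snd y)) * (\<integral>\<^sup>+lc. h (fst y, snd y, lc) \<partial>K (fst y) (snd y))"
      unfolding kern_def by (simp add: case_prod_beta' nn_integral_distr[OF mm])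
  qed
  also have "\<dots> = (\<integral>\<^sup>+x. (\<integral>\<^sup>+a. ennreal (pi0 x a) * (\<integral>\<^sup>+lc. h (x, a, lc) \<partial>K x a) \<partial>?C) \<partial>p)"
  proof -
    have hm: "(\<lambda>(y, lc). h (fst y, snd y, lc)) \<in> borel_measurable ((p \<Otimes>\<^sub>M ?C) \<Otimes>\<^sub>M borel)"
      using measurable_compose[OF reassoc_meas h] by (simp add: case_prod_beta')
    have G: "(\<lambda>y. ennreal (pi0 (fst y) (snd y)) * (\<integral>\<^sup>+lc. h (fst y, snd y, lc) \<partial>K (fst y) (snd y))) \<in> borel_measurable (p \<Otimes>\<^sub>M ?C)"
      by (intro borel_measurable_times_ennreal measurable_compose[OF pi0_meas2 measurable_ennreal]
            nn_integral_measurable_subprob_algebra2[OF hm K_sub])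
    show ?thesis using sf.nn_integral_fst[OF G] by simp
  qed
  also have "\<dots> = (\<integral>\<^sup>+x. (\<Sum>a\<in>UNIV. ennreal (pi0 x a) * (\<integral>\<^sup>+lc. h (x,a,lc) \<partial>K x a)) \<partial>p)"
    by (simp add: nn_integral_count_space_finite)
  finally show ?thesis .
qed

end


lemma data_mean:
  fixes M :: "'z measure" and f :: "'z \<Rightarrow> real"
  assumes M: "prob_space M" and f: "integrable M f" and n: "n > 0"
  shows "(\<integral>D. (1 / real n) * (\<Sum>i<n. f (D i)) \<partial>PiM {..<n} (\<lambda>_. M)) = integral\<^sup>L M f"
proof -
  have fm[measurable]: "f \<in> borel_measurable M" using f by simp
  have comp: "\<And>i. i < n \<Longrightarrow> distr (PiM {..<n} (\<lambda>_. M)) M (\<lambda>D. D i) = M"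
    by (rule distr_PiM_component) (auto simp: M)
  have int: "\<And>i. i < n \<Longrightarrow> integrable (PiM {..<n} (\<lambda>_. M)) (\<lambda>D. f (D i))"
  proof -
    fix i assume i: "i < n"
    have "integrable (distr (PiM {..<n} (\<lambda>_. M)) M (\<lambda>D. D i)) f" using comp[OF i] f by simp
    then show "integrable (PiM {..<n} (\<lambda>_. M)) (\<lambda>D. f (D i))"
      by (subst (asm) integrable_distr_eq) (auto intro: measurable_component_singleton simp: i)
  qed
  have eq: "\<And>i. i < n \<Longrightarrow> (\<integral>D. f (D i) \<partial>PiM {..<n} (\<lambda>_. M)) = integral\<^sup>L M f"
  proof -
    fix i assume i: "i < n"
    have "(\<integral>D. f (D i) \<partial>PiM {..<n} (\<lambda>_. M)) = integral\<^sup>L (distr (PiM {..<n} (\<lambda>_. M)) M (\<lambda>D. D i)) f"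
      by (rule integral_distr[symmetric]) (auto intro: measurable_component_singleton simp: i)
    then show "(\<integral>D. f (D i) \<partial>PiM {..<n} (\<lambda>_. M)) = integral\<^sup>L M f" using comp[OF i] by simp
  qed
  have "(\<integral>D. (1 / real n) * (\<Sum>i<n. f (D i)) \<partial>PiM {..<n} (\<lambda>_. M))
      = (1 / real n) * (\<Sum>i<n. (\<integral>D. f (D i) \<partial>PiM {..<n} (\<lambda>_. M)))"
    using int by (simp add: integral_sum)
  also have "\<dots> = (1 / real n) * (real n * integral\<^sup>L M f)" using eq by simp
  also have "\<dots> = integral\<^sup>L M f" using n by simp
  finally show ?thesis .
qed

lemma data_section:
  fixes M :: "'z measure" and f :: "'z \<Rightarrow> real"
  assumes M: "prob_space M" and n: "n > 0"
    and F: "integrable (PiM {..<n} (\<lambda>_. M)) (\<lambda>D. (1 / real n) * (\<Sum>i<n. f (D i)))"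
  shows "integrable M f"
proof -
  interpret ps: product_prob_space "\<lambda>_::nat. M" UNIV by (rule product_prob_spaceI) (simp add: M)
  define J where "J = {1..<n}"
  define I where "I = {0::nat}"
  have IJ: "J \<union> I = {..<n}" using n unfolding I_def J_def by auto
  have disj: "J \<inter> I = {}" unfolding I_def J_def by auto
  let ?F = "\<lambda>D. (1 / real n) * (\<Sum>i<n. f (D i))"
  have Fm[measurable]: "?F \<in> borel_measurable (PiM (J \<union> I) (\<lambda>_. M))" unfolding IJ by (rule borel_measurable_integrable[OF F])
  have "integrable (distr (PiM J (\<lambda>_. M) \<Otimes>\<^sub>M PiM I (\<lambda>_. M)) (PiM (J \<union> I) (\<lambda>_. M)) (merge J I)) ?F"
    using F IJ ps.distr_merge[OF disj] unfolding I_def J_def by simp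
  then have int2: "integrable (PiM J (\<lambda>_. M) \<Otimes>\<^sub>M PiM I (\<lambda>_. M)) (\<lambda>x. ?F (merge J I x))"
    by (subst (asm) integrable_distr_eq[OF measurable_merge Fm])
  interpret pJ: prob_space "PiM J (\<lambda>_. M)" by (rule prob_space_PiM) (simp add: M)
  interpret pI: prob_space "PiM I (\<lambda>_. M)" by (rule prob_space_PiM) (simp add: M)
  interpret pp: pair_sigma_finite "PiM J (\<lambda>_. M)" "PiM I (\<lambda>_. M)" by unfold_locales
  have "AE y in PiM J (\<lambda>_. M). integrable (PiM I (\<lambda>_. M)) (\<lambda>x. ?F (merge J I (y, x)))"
    by (rule pp.AE_integrable_fst'[OF int2])
  then obtain y where y: "y \<in> space (PiM J (\<lambda>_. M))" and yi: "integrable (PiM I (\<lambda>_. M)) (\<lambda>x. ?F (merge J I (y, x)))"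
  proof -
    assume r: "\<And>y. y \<in> space (PiM J (\<lambda>_. M)) \<Longrightarrow> integrable (PiM I (\<lambda>_. M)) (\<lambda>x. ?F (merge J I (y, x))) \<Longrightarrow> thesis"
    assume ae: "AE y in PiM J (\<lambda>_. M). integrable (PiM I (\<lambda>_. M)) (\<lambda>x. ?F (merge J I (y, x)))"
    show thesis
    proof (rule ccontr)
      assume "\<not> thesis"
      note nt = this
      have "AE y in PiM J (\<lambda>_. M). False" using ae AE_space[of "PiM J (\<lambda>_. M)"]
      proof eventually_elim
        case (elim y) then show False using r nt by blast
      qed
      then show False by (simp add: pJ.AE_False)
    qed
  qed
  define c where "c = (\<Sum>i\<in>J. f (y i))"
  have eqF: "\<And>x. ?F (merge J I (y, x)) = (1 / real n) * (f (x 0) + c)"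
  proof -
    fix x
    have "(\<Sum>i<n. f (merge J I (y, x) i)) = (\<Sum>i\<in>J \<union> I. f (merge J I (y, x) i))" using IJ by simp
    also have "\<dots> = (\<Sum>i\<in>J. f (merge J I (y, x) i)) + (\<Sum>i\<in>I. f (merge J I (y, x) i))"
      by (rule sum.union_disjoint) (auto simp: I_def J_def)
    also have "\<dots> = c + f (x 0)"
      unfolding c_def by (auto simp: merge_def I_def J_def intro!: sum.cong)
    finally show "?F (merge J I (y, x)) = (1 / real n) * (f (x 0) + c)" by simp
  qed
  have h1: "integrable (PiM I (\<lambda>_. M)) (\<lambda>x. (1 / real n) * (f (x 0) + c))"
    using yi unfolding eqF .
  have h2: "integrable (PiM I (\<lambda>_. M)) (\<lambda>x. real n * ((1 / real n) * (f (x 0) + c)) - c)"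
    by (intro Bochner_Integration.integrable_diff integrable_mult_right h1 pI.integrable_const)
  have i0: "integrable (PiM I (\<lambda>_. M)) (\<lambda>x. f (x 0))"
    by (rule Bochner_Integration.integrable_cong[THEN iffD1, OF refl _ h2]) (use n in simp)
  have m0: "(\<lambda>x. f (x 0)) \<in> borel_measurable (PiM I (\<lambda>_. M))" using i0 by simp
  have rm: "(\<lambda>z. \<lambda>i\<in>I. z) \<in> measurable M (PiM I (\<lambda>_. M))"
    by (rule measurable_restrict) simp
  have fm: "f \<in> borel_measurable M"
    using measurable_compose[OF rm m0] by (simp add: I_def)
  have "distr (PiM I (\<lambda>_. M)) M (\<lambda>x. x 0) = M"
    by (rule distr_PiM_component) (auto simp: M I_def)
  moreover have "integrable (distr (PiM I (\<lambda>_. M)) M (\<lambda>x. x 0)) f"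
  proof (subst integrable_distr_eq[OF _ fm])
    show "(\<lambda>x. x 0) \<in> measurable (PiM I (\<lambda>_. M)) M"
      by (rule measurable_component_singleton) (simp add: I_def)
    show "integrable (PiM I (\<lambda>_. M)) (\<lambda>x. f (x 0))" by (rule i0)
  qed
  ultimately show ?thesis by simp
qed



locale full = gsetup p pi0 K for p :: "'x measure" and pi0 :: "'x \<Rightarrow> 'a::finite \<Rightarrow> real" and K +
  fixes pie pi0h :: "'x \<Rightarrow> 'a \<Rightarrow> real" and Gh :: "real \<Rightarrow> 'x \<Rightarrow> 'a \<Rightarrow> real"
    and Sh :: "'x \<Rightarrow> 'a \<Rightarrow> real \<Rightarrow> real" and t :: real
  assumes pie_policy: "is_policy p pie"
    and support: "\<forall>x\<in>space p. \<forall>a. pie x a > 0 \<longrightarrow> pi0 x a > 0"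
    and cond_indep: "\<forall>x\<in>space p. \<forall>a. \<forall>A\<in>sets borel. \<forall>B\<in>sets borel.
         measure (K x a) (A \<times> B) = measure (K x a) (A \<times> UNIV) * measure (K x a) (UNIV \<times> B)"
    and models_pos: "\<forall>x\<in>space p. \<forall>a. pie x a > 0 \<longrightarrow> Gh t x a > 0 \<and> pi0h x a > 0"
    and cens_correct: "\<forall>x\<in>space p. \<forall>a. Gh t x a = cens_surv K t x a"
begin

abbreviation "S x a \<equiv> surv K x a t"
abbreviation "G x a \<equiv> cens_surv K t x a"
definition "Aset = {lc::real\<times>real. t < min (fst lc) (snd lc)}"
definition ind :: "'x \<times> 'a \<times> real \<times> real \<Rightarrow> real" where
  "ind z = (if snd (snd z) \<in> Aset then 1 else 0)"

lemma Aset_borel[measurable]: "Aset \<in> sets borel"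
  unfolding Aset_def by (intro borel_open open_Collect_less continuous_intros)

lemma set1_borel[measurable]: "{lc::real\<times>real. t < fst lc} \<in> sets borel" by (intro borel_open open_Collect_less continuous_intros)
lemma set2_borel[measurable]: "{lc::real\<times>real. t < snd lc} \<in> sets borel" by (intro borel_open open_Collect_less continuous_intros)

lemma S_meas[measurable]: "(\<lambda>x. S x a) \<in> borel_measurable p"
  unfolding surv_def by (rule measurable_compose[OF K_sub1 measurable_measure_subprob_algebra]) simp

lemma G_meas[measurable]: "(\<lambda>x. G x a) \<in> borel_measurable p"
  unfolding cens_surv_def by (rule measurable_compose[OF K_sub1 measurable_measure_subprob_algebra]) simp

lemma pie_meas[measurable]: "(\<lambda>x. pie x a) \<in> borel_measurable p"
  using pie_policy unfolding is_policy_def by auto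
lemma pie_nonneg: "x \<in> space p \<Longrightarrow> 0 \<le> pie x a"
  using pie_policy unfolding is_policy_def by auto
lemma pie_sum: "x \<in> space p \<Longrightarrow> (\<Sum>a\<in>UNIV. pie x a) = 1"
  using pie_policy unfolding is_policy_def by auto

lemma SG_bounds: "x \<in> space p \<Longrightarrow> 0 \<le> S x a \<and> S x a \<le> 1 \<and> 0 \<le> G x a \<and> G x a \<le> 1"
proof -
  assume x: "x \<in> space p"
  interpret k: prob_space "K x a" by (rule K_prob[OF x])
  show ?thesis unfolding surv_def cens_surv_def by simp
qed

lemma KA: "x \<in> space p \<Longrightarrow> emeasure (K x a) Aset = ennreal (S x a * G x a)"
proof -
  assume x: "x \<in> space p"
  interpret k: prob_space "K x a" by (rule K_prob[OF x])
  have e1: "Aset = {t<..} \<times> {t<..}" unfolding Aset_def by auto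
  have e2: "{t<..} \<times> (UNIV::real set) = {lc. t < fst lc}" by auto
  have e3: "(UNIV::real set) \<times> {t<..} = {lc. t < snd lc}" by auto
  have "measure (K x a) Aset = S x a * G x a"
  proof -
    have "measure (K x a) ({t<..} \<times> {t<..}) = measure (K x a) ({t<..} \<times> UNIV) * measure (K x a) (UNIV \<times> {t<..})"
    proof -
      have o: "{t<..} \<in> sets (borel::real measure)" by simp
      have "\<forall>A\<in>sets borel. \<forall>B\<in>sets borel. measure (K x a) (A \<times> B) = measure (K x a) (A \<times> UNIV) * measure (K x a) (UNIV \<times> B)"
        using cond_indep x by blast
      then show ?thesis using o by blast
    qed
    then show ?thesis unfolding e1 surv_def cens_surv_def e2 e3 .
  qed
  then show ?thesis by (simp add: k.emeasure_eq_measure)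
qed

lemma KAc: "x \<in> space p \<Longrightarrow> emeasure (K x a) (space (K x a) - Aset) = ennreal (1 - S x a * G x a)"
proof -
  assume x: "x \<in> space p"
  interpret k: prob_space "K x a" by (rule K_prob[OF x])
  have "Aset \<in> sets (K x a)" using K_sets[OF x] by simp
  then have "measure (K x a) (space (K x a) - Aset) = 1 - measure (K x a) Aset"
    by (rule k.prob_compl)
  moreover have "measure (K x a) Aset = S x a * G x a" using KA[OF x, of a] SG_bounds[OF x, of a]
    by (simp add: k.emeasure_eq_measure)
  ultimately show ?thesis by (simp add: k.emeasure_eq_measure)
qed

lemma space_P: "space P = space (sample_space p)"
  by (rule sets_eq_imp_space_eq[OF sets_P])

lemma space_ss: "z \<in> space (sample_space p) \<longleftrightarrow> fst z \<in> space p"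
  unfolding sample_space_def by (cases z) (auto simp: space_pair_measure)

lemma meas_P: "h \<in> borel_measurable (sample_space p) \<Longrightarrow> h \<in> borel_measurable P"
  using measurable_cong_sets[OF sets_P refl] by simp

lemma lift_meas:
  fixes g :: "'x \<Rightarrow> 'a \<Rightarrow> real"
  assumes g: "\<And>a. (\<lambda>x. g x a) \<in> borel_measurable p"
  shows "(\<lambda>z. g (fst z) (fst (snd z))) \<in> borel_measurable (sample_space p)"
proof -
  have "(\<lambda>z. (\<lambda>a z. g (fst z) a) (fst (snd z)) z) \<in> borel_measurable (sample_space p :: ('x \<times> 'a \<times> real \<times> real) measure)"
  proof (rule measurable_compose_countable'[where f="\<lambda>a z. g (fst z) a" and g="\<lambda>z. fst (snd z)" and I=UNIV])
    show "\<And>a. a \<in> UNIV \<Longrightarrow> (\<lambda>z. g (fst z) a) \<in> borel_measurable (sample_space p)"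
      unfolding sample_space_def by (rule measurable_compose[OF measurable_fst g])
    show "(\<lambda>z. fst (snd z)) \<in> measurable (sample_space p) (count_space UNIV)"
      unfolding sample_space_def by (rule measurable_compose[OF measurable_snd measurable_fst])
  qed simp
  then show ?thesis by simp
qed

lemma lift_meas2:
  fixes g :: "'x \<Rightarrow> 'a \<Rightarrow> real"
  assumes g: "\<And>a. (\<lambda>x. g x a) \<in> borel_measurable p"
  shows "(\<lambda>y. g (fst y) (snd y)) \<in> borel_measurable (p \<Otimes>\<^sub>M count_space (UNIV::'a set))"
proof -
  have "(\<lambda>y. (\<lambda>a y. g (fst y) a) (snd y) y) \<in> borel_measurable (p \<Otimes>\<^sub>M count_space (UNIV::'a set))"
  proof (rule measurable_compose_countable'[where f="\<lambda>a y. g (fst y) a" and g=snd and I=UNIV])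
    fix a show "(\<lambda>y. g (fst y) a) \<in> borel_measurable (p \<Otimes>\<^sub>M count_space UNIV)"
      by (rule measurable_compose[OF measurable_fst g])
  qed simp_all
  then show ?thesis by simp
qed

lemma ind_meas: "ind \<in> borel_measurable (sample_space p)"
proof -
  have "(\<lambda>z. snd (snd z)) \<in> measurable (sample_space p) borel"
    unfolding sample_space_def by measurable
  then have "(\<lambda>z. indicator Aset (snd (snd z)) :: real) \<in> borel_measurable (sample_space p)"
    using measurable_compose[OF _ borel_measurable_indicator[OF Aset_borel]] by blast
  moreover have "ind = (\<lambda>z. indicator Aset (snd (snd z)))" by (auto simp: ind_def indicator_def fun_eq_iff)
  ultimately show ?thesis by simp
qed

lemma inner_ind:
  assumes x: "x \<in> space p" and d: "0 \<le> d"
  shows "(\<integral>\<^sup>+lc. ennreal (d * ind (x,a,lc)) \<partial>K x a) = ennreal (d * (S x a * G x a))"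
proof -
  have "(\<integral>\<^sup>+lc. ennreal (d * ind (x,a,lc)) \<partial>K x a) = (\<integral>\<^sup>+lc. ennreal d * indicator Aset lc \<partial>K x a)"
    by (intro nn_integral_cong) (auto simp: ind_def indicator_def)
  also have "\<dots> = ennreal d * emeasure (K x a) Aset"
    by (rule nn_integral_cmult_indicator) (simp add: K_sets[OF x])
  also have "\<dots> = ennreal (d * (S x a * G x a))"
    using KA[OF x, of a] SG_bounds[OF x, of a] d by (simp add: ennreal_mult)
  finally show ?thesis .
qed

lemma inner_nind:
  assumes x: "x \<in> space p" and e: "0 \<le> e"
  shows "(\<integral>\<^sup>+lc. ennreal (e * (1 - ind (x,a,lc))) \<partial>K x a) = ennreal (e * (1 - S x a * G x a))"
proof -
  have sp: "space (K x a) = UNIV" using sets_eq_imp_space_eq[OF K_sets[OF x, of a]] by simp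
  have "(\<integral>\<^sup>+lc. ennreal (e * (1 - ind (x,a,lc))) \<partial>K x a) = (\<integral>\<^sup>+lc. ennreal e * indicator (space (K x a) - Aset) lc \<partial>K x a)"
    by (intro nn_integral_cong) (auto simp: ind_def indicator_def sp)
  also have "\<dots> = ennreal e * emeasure (K x a) (space (K x a) - Aset)"
    by (rule nn_integral_cmult_indicator) (rule sets.compl_sets, simp add: K_sets[OF x] Aset_borel)
  also have "\<dots> = ennreal (e * (1 - S x a * G x a))"
    using KAc[OF x, of a] SG_bounds[OF x, of a] e
    by (simp add: ennreal_mult mult_le_one)
  finally show ?thesis .
qed

lemma inner_const:
  assumes x: "x \<in> space p"
  shows "(\<integral>\<^sup>+lc. ennreal c \<partial>K x a) = ennreal c"
proof -
  interpret k: prob_space "K x a" by (rule K_prob[OF x])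
  show ?thesis by (simp add: k.emeasure_space_1)
qed

lemma P_prob: "prob_space P"
proof
  have "emeasure P (space P) = (\<integral>\<^sup>+z. 1 \<partial>P)" by simp
  also have "\<dots> = (\<integral>\<^sup>+x. (\<Sum>a\<in>UNIV. ennreal (pi0 x a) * (\<integral>\<^sup>+lc. 1 \<partial>K x a)) \<partial>p)"
    by (rule master) simp
  also have "\<dots> = (\<integral>\<^sup>+x. 1 \<partial>p)"
  proof (rule nn_integral_cong)
    fix x assume x: "x \<in> space p"
    have "(\<Sum>a\<in>UNIV. ennreal (pi0 x a) * (\<integral>\<^sup>+lc. 1 \<partial>K x a)) = (\<Sum>a\<in>UNIV. ennreal (pi0 x a))"
      using inner_const[OF x, where c=1] by simp
    also have "\<dots> = ennreal (\<Sum>a\<in>UNIV. pi0 x a)" using pi0_nonneg[OF x] by (simp add: sum_ennreal)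
    also have "\<dots> = 1" using pi0_sum[OF x] by simp
    finally show "(\<Sum>a\<in>UNIV. ennreal (pi0 x a) * (\<integral>\<^sup>+lc. 1 \<partial>K x a)) = 1" .
  qed
  also have "\<dots> = 1" using prob_space.emeasure_space_1[OF p_prob] by simp
  finally show "emeasure P (space P) = 1" .
qed

lemma int_nonneg:
  assumes hm: "h \<in> borel_measurable (sample_space p)"
    and hpos: "\<And>z. z \<in> space (sample_space p) \<Longrightarrow> 0 \<le> h z"
    and gint: "integrable p g" and gpos: "\<And>x. x \<in> space p \<Longrightarrow> 0 \<le> g x"
    and eq: "\<And>x. x \<in> space p \<Longrightarrow> (\<Sum>a\<in>UNIV. ennreal (pi0 x a) * (\<integral>\<^sup>+lc. ennreal (h (x,a,lc)) \<partial>K x a)) = ennreal (g x)"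
  shows "integrable P h \<and> integral\<^sup>L P h = integral\<^sup>L p g"
proof -
  have hm': "(\<lambda>z. ennreal (h z)) \<in> borel_measurable (sample_space p)" using hm by simp
  have "(\<integral>\<^sup>+z. ennreal (h z) \<partial>P) = (\<integral>\<^sup>+x. (\<Sum>a\<in>UNIV. ennreal (pi0 x a) * (\<integral>\<^sup>+lc. ennreal (h (x,a,lc)) \<partial>K x a)) \<partial>p)"
    by (rule master[OF hm'])
  also have "\<dots> = (\<integral>\<^sup>+x. ennreal (g x) \<partial>p)" by (rule nn_integral_cong) (simp add: eq)
  also have "\<dots> = ennreal (integral\<^sup>L p g)"
    by (rule nn_integral_eq_integral[OF gint]) (auto intro: AE_I2 gpos)
  finally have nn: "(\<integral>\<^sup>+z. ennreal (h z) \<partial>P) = ennreal (integral\<^sup>L p g)" .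
  have hP: "h \<in> borel_measurable P" by (rule meas_P[OF hm])
  have ae: "AE z in P. 0 \<le> h z" by (rule AE_I2) (simp add: space_P hpos)
  have i: "integrable P h" by (rule integrableI_nonneg[OF hP ae]) (simp add: nn)
  have "integral\<^sup>L P h = enn2real (\<integral>\<^sup>+z. ennreal (h z) \<partial>P)" by (rule integral_eq_nn_integral[OF hP ae])
  also have "\<dots> = integral\<^sup>L p g" using nn by (simp add: integral_nonneg_AE gpos AE_I2)
  finally show ?thesis using i by simp
qed

lemma zero_mean:
  fixes k :: "_ \<Rightarrow> real"
  assumes "integrable M k" "(\<integral>\<^sup>+z. ennreal (k z) \<partial>M) = (\<integral>\<^sup>+z. ennreal (- k z) \<partial>M)"
  shows "integral\<^sup>L M k = 0"
  using real_lebesgue_integral_def[OF assms(1)] assms(2) by simp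

end


context full
begin

definition "c1 x a = wgt pie pi0h x a / Gh t x a"
definition "vv x a = - (wgt pie pi0h x a * Sh x a t) + (\<Sum>b\<in>UNIV. pie x b * Sh x b t)"
definition "gg x = (\<Sum>a\<in>UNIV. pie x a * S x a)"

definition fI :: "'x \<times> 'a \<times> real \<times> real \<Rightarrow> real" where
  "fI z = (case observe z of (x, a, T, r) \<Rightarrow> wgt pie pi0h x a * ((if T > t then 1 else 0) / Gh t x a))"
definition fD :: "'x \<times> 'a \<times> real \<times> real \<Rightarrow> real" where
  "fD z = (case observe z of (x, a, T, r) \<Rightarrow>
        wgt pie pi0h x a * ((if T > t then 1 else 0) / Gh t x a - Sh x a t)
        + (\<Sum>b\<in>UNIV. pie x b * Sh x b t))"

lemma VI_eq: "V_ipcw_ips n pie pi0h Gh t (\<lambda>i. observe (D i)) = (1 / real n) * (\<Sum>i<n. fI (D i))"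
  unfolding V_ipcw_ips_def fI_def by simp

lemma VD_eq: "V_ipcw_dr n pie pi0h Gh Sh t (\<lambda>i. observe (D i)) = (1 / real n) * (\<Sum>i<n. fD (D i))"
  unfolding V_ipcw_dr_def fD_def by simp

lemma fI_eq: "fI z = c1 (fst z) (fst (snd z)) * ind z"
  by (cases z) (simp add: fI_def c1_def ind_def Aset_def observe_def)

lemma fD_eq: "fD z = c1 (fst z) (fst (snd z)) * ind z + vv (fst z) (fst (snd z))"
  by (cases z) (simp add: fD_def c1_def vv_def ind_def Aset_def observe_def algebra_simps)

lemma c1_nonneg: "x \<in> space p \<Longrightarrow> 0 \<le> c1 x a"
proof -
  assume x: "x \<in> space p"
  show ?thesis
  proof (cases "pie x a = 0")
    case True then show ?thesis by (simp add: c1_def wgt_def)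
  next
    case False
    then have "pie x a > 0" using pie_nonneg[OF x, of a] by simp
    then have "Gh t x a > 0 \<and> pi0h x a > 0" using models_pos x by blast
    then show ?thesis using \<open>pie x a > 0\<close> by (simp add: c1_def wgt_def)
  qed
qed

lemma wgt_nonneg: "x \<in> space p \<Longrightarrow> 0 \<le> wgt pie pi0h x a"
proof -
  assume x: "x \<in> space p"
  show ?thesis
  proof (cases "pie x a = 0")
    case True then show ?thesis by (simp add: wgt_def)
  next
    case False
    then have "pie x a > 0" using pie_nonneg[OF x, of a] by simp
    then have "Gh t x a > 0 \<and> pi0h x a > 0" using models_pos x by blast
    then show ?thesis using \<open>pie x a > 0\<close> by (simp add: wgt_def)
  qed
qed

lemma pi0_wgt: "x \<in> space p \<Longrightarrow> pi0h x a = pi0 x a \<Longrightarrow> pi0 x a * wgt pie pi0h x a = pie x a"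
proof -
  assume x: "x \<in> space p" and h: "pi0h x a = pi0 x a"
  show ?thesis
  proof (cases "pie x a = 0")
    case True then show ?thesis by (simp add: wgt_def)
  next
    case False
    then have "pie x a > 0" using pie_nonneg[OF x, of a] by simp
    then have "pi0 x a > 0" using support x by auto
    then show ?thesis using h by (simp add: wgt_def)
  qed
qed

lemma key1: "x \<in> space p \<Longrightarrow> pi0h x a = pi0 x a \<Longrightarrow> pi0 x a * (c1 x a * (S x a * G x a)) = pie x a * S x a"
proof -
  assume x: "x \<in> space p" and h: "pi0h x a = pi0 x a"
  show ?thesis
  proof (cases "pie x a = 0")
    case True then show ?thesis by (simp add: c1_def wgt_def)
  next
    case False
    then have "pie x a > 0" using pie_nonneg[OF x, of a] by simp
    then have "Gh t x a > 0" using models_pos x by auto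
    moreover have "Gh t x a = G x a" using cens_correct x by auto
    ultimately have "pi0 x a * (c1 x a * (S x a * G x a)) = pi0 x a * wgt pie pi0h x a * S x a"
      unfolding c1_def by (simp add: field_simps)
    then show ?thesis using pi0_wgt[OF x h] by simp
  qed
qed

lemma gg_meas: "gg \<in> borel_measurable p"
  unfolding gg_def by measurable

lemma gg_bounds: "x \<in> space p \<Longrightarrow> 0 \<le> gg x \<and> gg x \<le> 1"
proof -
  assume x: "x \<in> space p"
  have "gg x \<le> (\<Sum>a\<in>UNIV. pie x a)" unfolding gg_def
    by (intro sum_mono) (use SG_bounds[OF x] pie_nonneg[OF x] in \<open>auto intro: mult_left_le\<close>)
  moreover have "0 \<le> gg x" unfolding gg_def
    by (intro sum_nonneg) (use SG_bounds[OF x] pie_nonneg[OF x] in auto)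
  ultimately show ?thesis using pie_sum[OF x] by simp
qed

lemma gg_int: "integrable p gg"
proof -
  interpret pp: prob_space p by (rule p_prob)
  show ?thesis
    by (rule pp.integrable_const_bound[where B=1]) (use gg_bounds gg_meas in \<open>auto intro: AE_I2\<close>)
qed

lemma gg_value: "integral\<^sup>L p gg = policy_value p pie K t"
  unfolding gg_def policy_value_def by simp

lemma ennreal_mult_max: "0 \<le> a \<Longrightarrow> ennreal a * ennreal b = ennreal (a * max b 0)"
  by (cases "0 \<le> b") (auto simp: ennreal_mult ennreal_neg)

lemma c1_meas_A:
  assumes A: "\<forall>x\<in>space p. \<forall>a. pi0h x a = pi0 x a"
  shows "(\<lambda>x. c1 x a) \<in> borel_measurable p"
proof -
  have m: "(\<lambda>x. pie x a / pi0 x a / G x a) \<in> borel_measurable p" by measurable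
  have eq: "\<And>x. x \<in> space p \<Longrightarrow> c1 x a = pie x a / pi0 x a / G x a"
    using A cens_correct by (simp add: c1_def wgt_def)
  show ?thesis by (subst measurable_cong[OF eq]) (simp_all add: m)
qed

lemma h1_props:
  assumes A: "\<forall>x\<in>space p. \<forall>a. pi0h x a = pi0 x a"
    and cm: "\<And>a. (\<lambda>x. c1 x a) \<in> borel_measurable p"
  shows "integrable P (\<lambda>z. c1 (fst z) (fst (snd z)) * ind z) \<and>
         integral\<^sup>L P (\<lambda>z. c1 (fst z) (fst (snd z)) * ind z) = integral\<^sup>L p gg"
proof (rule int_nonneg)
  show "(\<lambda>z. c1 (fst z) (fst (snd z)) * ind z) \<in> borel_measurable (sample_space p)"
    using lift_meas[OF cm] ind_meas by (rule borel_measurable_times)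
  show "\<And>z. z \<in> space (sample_space p) \<Longrightarrow> 0 \<le> c1 (fst z) (fst (snd z)) * ind z"
    using c1_nonneg by (auto simp: space_ss ind_def)
  show "integrable p gg" by (rule gg_int)
  show "\<And>x. x \<in> space p \<Longrightarrow> 0 \<le> gg x" using gg_bounds by blast
  fix x assume x: "x \<in> space p"
  have "(\<Sum>a\<in>UNIV. ennreal (pi0 x a) * (\<integral>\<^sup>+lc. ennreal (c1 (fst (x, a, lc)) (fst (snd (x, a, lc))) * ind (x, a, lc)) \<partial>K x a))
      = (\<Sum>a\<in>UNIV. ennreal (pie x a * S x a))"
  proof (rule sum.cong[OF refl])
    fix a
    have "ennreal (pi0 x a) * (\<integral>\<^sup>+lc. ennreal (c1 (fst (x, a, lc)) (fst (snd (x, a, lc))) * ind (x, a, lc)) \<partial>K x a)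
        = ennreal (pi0 x a) * ennreal (c1 x a * (S x a * G x a))"
      using inner_ind[OF x c1_nonneg[OF x, of a], of a] by simp
    also have "\<dots> = ennreal (pi0 x a * (c1 x a * (S x a * G x a)))"
      using pi0_nonneg[OF x, of a] c1_nonneg[OF x, of a] SG_bounds[OF x, of a] by (simp add: ennreal_mult)
    also have "\<dots> = ennreal (pie x a * S x a)"
    proof -
      have "pi0h x a = pi0 x a" using A x by blast
      from key1[OF x this] show ?thesis by (simp only:)
    qed
    finally show "ennreal (pi0 x a) * (\<integral>\<^sup>+lc. ennreal (c1 (fst (x, a, lc)) (fst (snd (x, a, lc))) * ind (x, a, lc)) \<partial>K x a) = ennreal (pie x a * S x a)" .
  qed
  also have "\<dots> = ennreal (gg x)" unfolding gg_def
    using pie_nonneg[OF x] SG_bounds[OF x] by (simp add: sum_ennreal)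
  finally show "(\<Sum>a\<in>UNIV. ennreal (pi0 x a) * (\<integral>\<^sup>+lc. ennreal (c1 (fst (x, a, lc)) (fst (snd (x, a, lc))) * ind (x, a, lc)) \<partial>K x a)) = ennreal (gg x)" .
qed

lemma part1:
  assumes A: "\<forall>x\<in>space p. \<forall>a. pi0h x a = pi0 x a" and n: "n > 0"
  shows "(\<integral>D. V_ipcw_ips n pie pi0h Gh t (\<lambda>i. observe (D i)) \<partial>data_dist n P) = policy_value p pie K t"
proof -
  have fI': "fI = (\<lambda>z. c1 (fst z) (fst (snd z)) * ind z)" using fI_eq by (simp add: fun_eq_iff)
  have h: "integrable P fI \<and> integral\<^sup>L P fI = integral\<^sup>L p gg"
    unfolding fI' by (rule h1_props[OF A c1_meas_A[OF A]])
  have "(\<integral>D. V_ipcw_ips n pie pi0h Gh t (\<lambda>i. observe (D i)) \<partial>data_dist n P)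
      = (\<integral>D. (1 / real n) * (\<Sum>i<n. fI (D i)) \<partial>PiM {..<n} (\<lambda>_. P))"
    unfolding VI_eq data_dist_def ..
  also have "\<dots> = integral\<^sup>L P fI" by (rule data_mean[OF P_prob _ n]) (use h in blast)
  finally show ?thesis using h gg_value by simp
qed

lemma zero_mean_xa:
  fixes w :: "'x \<Rightarrow> 'a \<Rightarrow> real"
  assumes wm: "\<And>a. (\<lambda>x. w x a) \<in> borel_measurable p"
    and ws: "\<And>x. x \<in> space p \<Longrightarrow> (\<Sum>a\<in>UNIV. pi0 x a * w x a) = 0"
    and wi: "integrable P (\<lambda>z. w (fst z) (fst (snd z)))"
  shows "integral\<^sup>L P (\<lambda>z. w (fst z) (fst (snd z))) = 0"
proof (rule zero_mean[OF wi])
  have lm: "(\<lambda>z. w (fst z) (fst (snd z))) \<in> borel_measurable (sample_space p)" by (rule lift_meas[OF wm])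
  have lm2: "(\<lambda>z. - w (fst z) (fst (snd z))) \<in> borel_measurable (sample_space p)" using lm by simp
  have "(\<integral>\<^sup>+z. ennreal (w (fst z) (fst (snd z))) \<partial>P)
      = (\<integral>\<^sup>+x. (\<Sum>a\<in>UNIV. ennreal (pi0 x a) * (\<integral>\<^sup>+lc. ennreal (w x a) \<partial>K x a)) \<partial>p)"
    using master[of "\<lambda>z. ennreal (w (fst z) (fst (snd z)))"] lm by simp
  also have "\<dots> = (\<integral>\<^sup>+x. ennreal (\<Sum>a\<in>UNIV. pi0 x a * max (w x a) 0) \<partial>p)"
  proof (rule nn_integral_cong)
    fix x assume x: "x \<in> space p"
    show "(\<Sum>a\<in>UNIV. ennreal (pi0 x a) * (\<integral>\<^sup>+lc. ennreal (w x a) \<partial>K x a)) = ennreal (\<Sum>a\<in>UNIV. pi0 x a * max (w x a) 0)"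
      using inner_const[OF x] pi0_nonneg[OF x] by (simp add: ennreal_mult_max sum_ennreal)
  qed
  also have "\<dots> = (\<integral>\<^sup>+x. ennreal (\<Sum>a\<in>UNIV. pi0 x a * max (- w x a) 0) \<partial>p)"
  proof (rule nn_integral_cong)
    fix x assume x: "x \<in> space p"
    have "(\<Sum>a\<in>UNIV. pi0 x a * max (w x a) 0) - (\<Sum>a\<in>UNIV. pi0 x a * max (- w x a) 0)
        = (\<Sum>a\<in>UNIV. pi0 x a * w x a)"
      by (simp add: sum_subtractf[symmetric] right_diff_distrib[symmetric]) (rule sum.cong, auto simp: max_def)
    then show "ennreal (\<Sum>a\<in>UNIV. pi0 x a * max (w x a) 0) = ennreal (\<Sum>a\<in>UNIV. pi0 x a * max (- w x a) 0)"
      using ws[OF x] by simp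
  qed
  also have "\<dots> = (\<integral>\<^sup>+x. (\<Sum>a\<in>UNIV. ennreal (pi0 x a) * (\<integral>\<^sup>+lc. ennreal (- w x a) \<partial>K x a)) \<partial>p)"
  proof (rule nn_integral_cong)
    fix x assume x: "x \<in> space p"
    show "ennreal (\<Sum>a\<in>UNIV. pi0 x a * max (- w x a) 0) = (\<Sum>a\<in>UNIV. ennreal (pi0 x a) * (\<integral>\<^sup>+lc. ennreal (- w x a) \<partial>K x a))"
      using inner_const[OF x] pi0_nonneg[OF x] by (simp add: ennreal_mult_max sum_ennreal)
  qed
  also have "\<dots> = (\<integral>\<^sup>+z. ennreal (- w (fst z) (fst (snd z))) \<partial>P)"
    using master[of "\<lambda>z. ennreal (- w (fst z) (fst (snd z)))"] lm2 by simp
  finally show "(\<integral>\<^sup>+z. ennreal (w (fst z) (fst (snd z))) \<partial>P) = (\<integral>\<^sup>+z. ennreal (- w (fst z) (fst (snd z))) \<partial>P)" .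
qed

lemma fD_parts:
  assumes fm: "fD \<in> borel_measurable (sample_space p)"
  shows "(\<lambda>x. c1 x a) \<in> borel_measurable p" "(\<lambda>x. vv x a) \<in> borel_measurable p"
proof -
  have e1: "(\<lambda>x. (x, a, (t+1, t+1))) \<in> measurable p (sample_space p)"
    unfolding sample_space_def by measurable
  have e0: "(\<lambda>x. (x, a, (t, t))) \<in> measurable p (sample_space p)"
    unfolding sample_space_def by measurable
  have m1: "(\<lambda>x. fD (x, a, (t+1, t+1))) \<in> borel_measurable p" by (rule measurable_compose[OF e1 fm])
  have m0: "(\<lambda>x. fD (x, a, (t, t))) \<in> borel_measurable p" by (rule measurable_compose[OF e0 fm])
  have v: "\<And>x. fD (x, a, (t, t)) = vv x a" by (simp add: fD_eq ind_def Aset_def)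
  have c: "\<And>x. fD (x, a, (t+1, t+1)) - fD (x, a, (t, t)) = c1 x a" by (simp add: fD_eq ind_def Aset_def)
  show "(\<lambda>x. vv x a) \<in> borel_measurable p" using m0 unfolding v .
  have "(\<lambda>x. fD (x, a, (t+1, t+1)) - fD (x, a, (t, t))) \<in> borel_measurable p" using m1 m0 by simp
  then show "(\<lambda>x. c1 x a) \<in> borel_measurable p" unfolding c .
qed

lemma partA:
  assumes A: "\<forall>x\<in>space p. \<forall>a. pi0h x a = pi0 x a" and intP: "integrable P fD"
  shows "integral\<^sup>L P fD = policy_value p pie K t"
proof -
  have fm: "fD \<in> borel_measurable (sample_space p)"
    using borel_measurable_integrable[OF intP] measurable_cong_sets[OF sets_P refl] by simp
  note cm = fD_parts(1)[OF fm] and vm = fD_parts(2)[OF fm]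
  let ?h1 = "\<lambda>z. c1 (fst z) (fst (snd z)) * ind z"
  let ?k = "\<lambda>z. vv (fst z) (fst (snd z))"
  have h1: "integrable P ?h1 \<and> integral\<^sup>L P ?h1 = integral\<^sup>L p gg" by (rule h1_props[OF A cm])
  have fD': "fD = (\<lambda>z. ?h1 z + ?k z)" by (simp add: fun_eq_iff fD_eq)
  have ki: "integrable P ?k"
  proof -
    have "integrable P (\<lambda>z. fD z - ?h1 z)" using intP h1 by simp
    then show ?thesis by (simp add: fD')
  qed
  have ws: "\<And>x. x \<in> space p \<Longrightarrow> (\<Sum>a\<in>UNIV. pi0 x a * vv x a) = 0"
  proof -
    fix x assume x: "x \<in> space p"
    have "(\<Sum>a\<in>UNIV. pi0 x a * vv x a) = - (\<Sum>a\<in>UNIV. pi0 x a * wgt pie pi0h x a * Sh x a t)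
        + (\<Sum>a\<in>UNIV. pi0 x a) * (\<Sum>b\<in>UNIV. pie x b * Sh x b t)"
    proof -
      define C where "C = (\<Sum>b\<in>UNIV. pie x b * Sh x b t)"
      have "(\<Sum>a\<in>UNIV. pi0 x a * vv x a) = (\<Sum>a\<in>UNIV. - (pi0 x a * wgt pie pi0h x a * Sh x a t) + pi0 x a * C)"
        unfolding vv_def C_def[symmetric] by (rule sum.cong) (simp_all add: ring_distribs)
      also have "\<dots> = - (\<Sum>a\<in>UNIV. pi0 x a * wgt pie pi0h x a * Sh x a t) + (\<Sum>a\<in>UNIV. pi0 x a) * C"
        by (simp add: sum.distrib sum_negf sum_distrib_right sum_subtractf)
      finally show ?thesis unfolding C_def .
    qed
    also have "\<dots> = 0"
    proof -
      have "\<And>a. pi0 x a * wgt pie pi0h x a = pie x a" using pi0_wgt[OF x] A x by blast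
      then show ?thesis using pi0_sum[OF x] by simp
    qed
    finally show "(\<Sum>a\<in>UNIV. pi0 x a * vv x a) = 0" .
  qed
  have k0: "integral\<^sup>L P ?k = 0" by (rule zero_mean_xa[OF vm ws ki])
  have "integral\<^sup>L P fD = integral\<^sup>L P ?h1 + integral\<^sup>L P ?k"
    unfolding fD' using h1 ki by (simp add: Bochner_Integration.integral_add)
  then show ?thesis using h1 k0 gg_value by simp
qed

lemma keyB:
  assumes x: "x \<in> space p"
  shows "0 \<le> c1 x a - wgt pie pi0h x a * S x a"
    and "(c1 x a - wgt pie pi0h x a * S x a) * (S x a * G x a) = wgt pie pi0h x a * S x a * (1 - S x a * G x a)"
proof -
  have b: "0 \<le> S x a" "S x a \<le> 1" "0 \<le> G x a" "G x a \<le> 1" using SG_bounds[OF x, of a] by auto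
  have w0: "0 \<le> wgt pie pi0h x a" by (rule wgt_nonneg[OF x])
  have "0 \<le> c1 x a - wgt pie pi0h x a * S x a \<and>
        (c1 x a - wgt pie pi0h x a * S x a) * (S x a * G x a) = wgt pie pi0h x a * S x a * (1 - S x a * G x a)"
  proof (cases "pie x a = 0")
    case True then show ?thesis by (simp add: c1_def wgt_def)
  next
    case False
    then have "pie x a > 0" using pie_nonneg[OF x, of a] by simp
    then have g0: "Gh t x a > 0" using models_pos x by blast
    have gG: "Gh t x a = G x a" using cens_correct x by blast
    have "wgt pie pi0h x a * S x a * G x a \<le> wgt pie pi0h x a"
      using w0 b by (simp add: mult_le_one mult_left_le mult.assoc)
    then have "wgt pie pi0h x a * S x a \<le> wgt pie pi0h x a / G x a"
      using g0 gG by (simp add: pos_le_divide_eq)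
    moreover have "(c1 x a - wgt pie pi0h x a * S x a) * (S x a * G x a) = wgt pie pi0h x a * S x a * (1 - S x a * G x a)"
      using g0 gG unfolding c1_def by (simp add: field_simps)
    ultimately show ?thesis using gG unfolding c1_def by simp
  qed
  then show "0 \<le> c1 x a - wgt pie pi0h x a * S x a"
    and "(c1 x a - wgt pie pi0h x a * S x a) * (S x a * G x a) = wgt pie pi0h x a * S x a * (1 - S x a * G x a)"
    by auto
qed

lemma partB:
  assumes B: "\<forall>x\<in>space p. \<forall>a. Sh x a t = surv K x a t" and intP: "integrable P fD"
  shows "integral\<^sup>L P fD = policy_value p pie K t"
proof -
  have fm: "fD \<in> borel_measurable (sample_space p)"
    using borel_measurable_integrable[OF intP] measurable_cong_sets[OF sets_P refl] by simp
  note cm = fD_parts(1)[OF fm] and vm = fD_parts(2)[OF fm]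
  let ?h3 = "\<lambda>z. gg (fst z)"
  let ?k = "\<lambda>z. c1 (fst z) (fst (snd z)) * ind z + vv (fst z) (fst (snd z)) - gg (fst z)"
  have h3m: "?h3 \<in> borel_measurable (sample_space p)"
    unfolding sample_space_def by (rule measurable_compose[OF measurable_fst gg_meas])
  have h3: "integrable P ?h3 \<and> integral\<^sup>L P ?h3 = integral\<^sup>L p gg"
  proof (rule int_nonneg[OF h3m])
    show "\<And>z. z \<in> space (sample_space p) \<Longrightarrow> 0 \<le> gg (fst z)" using gg_bounds by (auto simp: space_ss)
    show "integrable p gg" by (rule gg_int)
    show "\<And>x. x \<in> space p \<Longrightarrow> 0 \<le> gg x" using gg_bounds by blast
    fix x assume x: "x \<in> space p"
    have "(\<Sum>a\<in>UNIV. ennreal (pi0 x a) * (\<integral>\<^sup>+lc. ennreal (gg (fst (x, a, lc))) \<partial>K x a))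
        = (\<Sum>a\<in>UNIV. ennreal (pi0 x a * gg x))"
      using inner_const[OF x] pi0_nonneg[OF x] gg_bounds[OF x] by (simp add: ennreal_mult)
    also have "\<dots> = ennreal ((\<Sum>a\<in>UNIV. pi0 x a) * gg x)"
      using pi0_nonneg[OF x] gg_bounds[OF x] by (simp add: sum_ennreal sum_distrib_right)
    also have "\<dots> = ennreal (gg x)" using pi0_sum[OF x] by simp
    finally show "(\<Sum>a\<in>UNIV. ennreal (pi0 x a) * (\<integral>\<^sup>+lc. ennreal (gg (fst (x, a, lc))) \<partial>K x a)) = ennreal (gg x)" .
  qed
  have fD': "fD = (\<lambda>z. ?k z + ?h3 z)" by (simp add: fun_eq_iff fD_eq)
  have ki: "integrable P ?k"
  proof -
    have "integrable P (\<lambda>z. fD z - ?h3 z)" using intP h3 by simp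
    then show ?thesis by (simp add: fD')
  qed
  have km: "?k \<in> borel_measurable (sample_space p)"
    by (intro borel_measurable_diff borel_measurable_add borel_measurable_times lift_meas[where g=c1, OF cm] ind_meas lift_meas[where g=vv, OF vm] h3m)
  have km2: "(\<lambda>z. - ?k z) \<in> borel_measurable (sample_space p)" using borel_measurable_uminus[OF km] .
  have kx: "\<And>x a lc. x \<in> space p \<Longrightarrow> ?k (x, a, lc) = c1 x a * ind (x, a, lc) - wgt pie pi0h x a * S x a"
  proof -
    fix x a lc assume x: "x \<in> space p"
    have "\<And>b. Sh x b t = S x b" using B x by blast
    then show "?k (x, a, lc) = c1 x a * ind (x, a, lc) - wgt pie pi0h x a * S x a"
      by (simp add: vv_def gg_def)
  qed
  have k0: "integral\<^sup>L P ?k = 0"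
  proof (rule zero_mean[OF ki])
    have "(\<integral>\<^sup>+z. ennreal (?k z) \<partial>P)
        = (\<integral>\<^sup>+x. (\<Sum>a\<in>UNIV. ennreal (pi0 x a) * (\<integral>\<^sup>+lc. ennreal (?k (x, a, lc)) \<partial>K x a)) \<partial>p)"
      using master[of "\<lambda>z. ennreal (?k z)"] km by simp
    also have "\<dots> = (\<integral>\<^sup>+x. (\<Sum>a\<in>UNIV. ennreal (pi0 x a) * (\<integral>\<^sup>+lc. ennreal (- ?k (x, a, lc)) \<partial>K x a)) \<partial>p)"
    proof (rule nn_integral_cong, rule sum.cong[OF refl])
      fix x a assume x: "x \<in> space p"
      let ?d = "c1 x a - wgt pie pi0h x a * S x a"
      let ?e = "wgt pie pi0h x a * S x a"
      have e0: "0 \<le> ?e" using wgt_nonneg[OF x, of a] SG_bounds[OF x, of a] by simp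
      have d0: "0 \<le> ?d" by (rule keyB(1)[OF x])
      have "(\<integral>\<^sup>+lc. ennreal (?k (x, a, lc)) \<partial>K x a) = (\<integral>\<^sup>+lc. ennreal (?d * ind (x, a, lc)) \<partial>K x a)"
      proof (rule nn_integral_cong)
        fix lc show "ennreal (?k (x, a, lc)) = ennreal (?d * ind (x, a, lc))"
          using e0 by (subst kx[OF x]) (auto simp: ind_def ennreal_neg)
      qed
      also have "\<dots> = ennreal (?d * (S x a * G x a))" by (rule inner_ind[OF x d0])
      also have "\<dots> = ennreal (?e * (1 - S x a * G x a))" using keyB(2)[OF x, of a] by (simp only:)
      also have "\<dots> = (\<integral>\<^sup>+lc. ennreal (?e * (1 - ind (x, a, lc))) \<partial>K x a)" by (rule inner_nind[OF x e0, symmetric])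
      also have "\<dots> = (\<integral>\<^sup>+lc. ennreal (- ?k (x, a, lc)) \<partial>K x a)"
      proof (rule nn_integral_cong)
        fix lc show "ennreal (?e * (1 - ind (x, a, lc))) = ennreal (- ?k (x, a, lc))"
          using d0 by (subst kx[OF x]) (auto simp: ind_def ennreal_neg)
      qed
      finally show "ennreal (pi0 x a) * (\<integral>\<^sup>+lc. ennreal (?k (x, a, lc)) \<partial>K x a) = ennreal (pi0 x a) * (\<integral>\<^sup>+lc. ennreal (- ?k (x, a, lc)) \<partial>K x a)"
        by simp
    qed
    also have "\<dots> = (\<integral>\<^sup>+z. ennreal (- ?k z) \<partial>P)"
      using master[of "\<lambda>z. ennreal (- ?k z)"] km2 by simp
    finally show "(\<integral>\<^sup>+z. ennreal (?k z) \<partial>P) = (\<integral>\<^sup>+z. ennreal (- ?k z) \<partial>P)" .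
  qed
  have "integral\<^sup>L P fD = integral\<^sup>L P ?k + integral\<^sup>L P ?h3"
    unfolding fD' by (rule Bochner_Integration.integral_add) (use h3 ki in auto)
  then show ?thesis using h3 k0 gg_value by simp
qed

lemma main:
  assumes n: "n > 0"
  shows "((\<forall>x\<in>space p. \<forall>a. pi0h x a = pi0 x a) \<longrightarrow>
       (\<integral>D. V_ipcw_ips n pie pi0h Gh t (\<lambda>i. observe (D i)) \<partial>data_dist n (gen_dist p pi0 K))
         = policy_value p pie K t) \<and>
     (((\<forall>x\<in>space p. \<forall>a. pi0h x a = pi0 x a) \<or> (\<forall>x\<in>space p. \<forall>a. Sh x a t = surv K x a t)) \<longrightarrow>
     integrable (data_dist n (gen_dist p pi0 K)) (\<lambda>D. V_ipcw_dr n pie pi0h Gh Sh t (\<lambda>i. observe (D i))) \<longrightarrow>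
       (\<integral>D. V_ipcw_dr n pie pi0h Gh Sh t (\<lambda>i. observe (D i)) \<partial>data_dist n (gen_dist p pi0 K))
         = policy_value p pie K t)"
proof (intro conjI impI)
  assume A: "\<forall>x\<in>space p. \<forall>a. pi0h x a = pi0 x a"
  show "(\<integral>D. V_ipcw_ips n pie pi0h Gh t (\<lambda>i. observe (D i)) \<partial>data_dist n (gen_dist p pi0 K)) = policy_value p pie K t"
    by (rule part1[OF A n])
next
  assume AB: "(\<forall>x\<in>space p. \<forall>a. pi0h x a = pi0 x a) \<or> (\<forall>x\<in>space p. \<forall>a. Sh x a t = surv K x a t)"
    and I: "integrable (data_dist n (gen_dist p pi0 K)) (\<lambda>D. V_ipcw_dr n pie pi0h Gh Sh t (\<lambda>i. observe (D i)))"
  have I': "integrable (PiM {..<n} (\<lambda>_. P)) (\<lambda>D. (1 / real n) * (\<Sum>i<n. fD (D i)))"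
    using I unfolding VD_eq data_dist_def .
  have intP: "integrable P fD" by (rule data_section[OF P_prob n I'])
  have "(\<integral>D. V_ipcw_dr n pie pi0h Gh Sh t (\<lambda>i. observe (D i)) \<partial>data_dist n (gen_dist p pi0 K)) = integral\<^sup>L P fD"
    unfolding VD_eq data_dist_def by (rule data_mean[OF P_prob intP n])
  moreover have "integral\<^sup>L P fD = policy_value p pie K t"
    using AB partA[OF _ intP] partB[OF _ intP] by blast
  ultimately show "(\<integral>D. V_ipcw_dr n pie pi0h Gh Sh t (\<lambda>i. observe (D i)) \<partial>data_dist n (gen_dist p pi0 K)) = policy_value p pie K t"
    by simp
qed

end

theorem theorem1:
  fixes p :: "'x measure"
    and pi0 pie pi0h :: "'x \<Rightarrow> 'a::finite \<Rightarrow> real"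
    and K :: "'x \<Rightarrow> 'a \<Rightarrow> (real \<times> real) measure"
    and Gh :: "real \<Rightarrow> 'x \<Rightarrow> 'a \<Rightarrow> real"
    and Sh :: "'x \<Rightarrow> 'a \<Rightarrow> real \<Rightarrow> real"
    and n :: nat and t :: real
  assumes p_prob: "prob_space p"
    and pi0_policy: "is_policy p pi0"
    and pie_policy: "is_policy p pie"
    and K_kernel: "(\<lambda>(x, a). K x a) \<in> measurable (p \<Otimes>\<^sub>M count_space UNIV) (prob_algebra borel)"
    and n_pos: "n > 0"
    and t_nonneg: "t \<ge> 0"
    and support: "\<forall>x\<in>space p. \<forall>a. pie x a > 0 \<longrightarrow> pi0 x a > 0"
    and cond_indep: "\<forall>x\<in>space p. \<forall>a. \<forall>A\<in>sets borel. \<forall>B\<in>sets borel.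
         measure (K x a) (A \<times> B) = measure (K x a) (A \<times> UNIV) * measure (K x a) (UNIV \<times> B)"
    and models_pos: "\<forall>x\<in>space p. \<forall>a. pie x a > 0 \<longrightarrow> Gh t x a > 0 \<and> pi0h x a > 0"
    and cens_correct: "\<forall>x\<in>space p. \<forall>a. Gh t x a = cens_surv K t x a"
  shows
    "((\<forall>x\<in>space p. \<forall>a. pi0h x a = pi0 x a) \<longrightarrow>
       (\<integral>D. V_ipcw_ips n pie pi0h Gh t (\<lambda>i. observe (D i)) \<partial>data_dist n (gen_dist p pi0 K))
         = policy_value p pie K t) \<and>
     (((\<forall>x\<in>space p. \<forall>a. pi0h x a = pi0 x a) \<or> (\<forall>x\<in>space p. \<forall>a. Sh x a t = surv K x a t)) \<longrightarrow>
     integrable (data_dist n (gen_dist p pi0 K)) (\<lambda>D. V_ipcw_dr n pie pi0h Gh Sh t (\<lambda>i. observe (D i))) \<longrightarrow>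
       (\<integral>D. V_ipcw_dr n pie pi0h Gh Sh t (\<lambda>i. observe (D i)) \<partial>data_dist n (gen_dist p pi0 K))
         = policy_value p pie K t)"
  proof -
  interpret f: full p pi0 K pie pi0h Gh Sh t
    by (intro full.intro gsetup.intro full_axioms.intro p_prob pi0_policy K_kernel pie_policy support cond_indep models_pos cens_correct)
  show ?thesis by (rule f.main[OF n_pos])
qed

end
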